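(* Let $X$ be an $L$-space with a convexifying operator $P$, $(T,r)$ a metric compact, $\mu$ a Borel measure on $T$, $\omega$ a modulus of continuity, $t\in T$, and $Q\subset T$ a compact set with $\mu(Q)>0$. Then $$\sup_{f\in H^\omega(T,X),\ \int_Q f\,d\mu=\theta}h_X(P(f(t)),\theta)\le\tfrac{1}{\mu(Q)}\int_Q\omega(r(t,s))\,d\mu(s).$$ If $X$ is isotropic and $X^{\rm inv}\cap X^{\rm c}\ne\{\theta\}$, then the inequality becomes an equality.
   Context: Semilinear space: a set $X$ with addition and multiplication by reals such that for all $x,y,z\in X$, $\alpha,\beta\in\mathbb R$: $x+y=y+x$; $x+(y+z)=(x+y)+z$; there is $\theta$ with $x+\theta=x$; $\alpha(x+y)=\alpha x+\alpha y$; $\alpha(\beta x)=(\alpha\beta)x$; $1\cdot x=x$, $0\cdot x=\theta$. $x$ is convex if $(\alpha+\beta)x=\alpha x+\beta x$ for all $\alpha,\beta\ge0$ ($X^{\rm c}$: convex elements); $x$ is invertible if $x+x'=\theta$ for some $x'$ ($X^{\rm inv}$: invertible elements). An $L$-space is a semilinear space with a complete separable metric $h_X$ satisfying $h_X(\alpha x,\alpha y)=|\alpha|h_X(x,y)$ and $h_X(x+z,y+z)\le h_X(x,y)$; isotropic if always equality. A convexifying operator is a surjective $P\colon X\to X^{\rm c}$ with $h_X(P(x),P(y))\le h_X(x,y)$, $P\circ P=P$, $P(\alpha x+\beta y)=\alpha P(x)+\beta P(y)$ for all $x,y,\alpha,\beta$. Integral: $f\colon T\to X$ is measurable if $h_X(f(\cdot),x)$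 is Borel measurable for all $x$; for simple bounded $f$ with values $f_i$ on disjoint Borel sets $T_i$ covering $T$, $\int_Tf\,d\mu=\sum_iP(f_i)\mu(T_i)$; for bounded measurable $f$, $\int_Tf\,d\mu$ is the limit of integrals of any uniformly bounded sequence of simple functions converging to $f$ a.e.; $\int_Qf\,d\mu=\int_T\chi_Qf\,d\mu$. Modulus of continuity: non-decreasing continuous $\omega\colon[0,\infty)\to[0,\infty)$, $\omega(0)=0$, $\omega(a+b)\le\omega(a)+\omega(b)$; $H^\omega(T,X)=\{f: h_X(f(s),f(t))\le\omega(r(s,t))\ \forall s,t\}$. *)

theory Defs
  imports "HOL-Probability.Probability"
begin

definition semilinear_space ::
  "('x \<Rightarrow> 'x \<Rightarrow> 'x) \<Rightarrow> (real \<Rightarrow> 'x \<Rightarrow> 'x) \<Rightarrow> 'x \<Rightarrow> bool" where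
  "semilinear_space add smul \<theta> \<longleftrightarrow>
     (\<forall>x y. add x y = add y x) \<and>
     (\<forall>x y z. add x (add y z) = add (add x y) z) \<and>
     (\<forall>x. add x \<theta> = x) \<and>
     (\<forall>a x y. smul a (add x y) = add (smul a x) (smul a y)) \<and>
     (\<forall>a b x. smul a (smul b x) = smul (a * b) x) \<and>
     (\<forall>x. smul 1 x = x) \<and>
     (\<forall>x. smul 0 x = \<theta>)"

definition convex_elems :: "('x \<Rightarrow> 'x \<Rightarrow> 'x) \<Rightarrow> (real \<Rightarrow> 'x \<Rightarrow> 'x) \<Rightarrow> 'x set" where
  "convex_elems add smul =
     {x. \<forall>a b. a \<ge> 0 \<longrightarrow> b \<ge> 0 \<longrightarrow> smul (a + b) x = add (smul a x) (smul b x)}"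

definition invertible_elems :: "('x \<Rightarrow> 'x \<Rightarrow> 'x) \<Rightarrow> 'x \<Rightarrow> 'x set" where
  "invertible_elems add \<theta> = {x. \<exists>x'. add x x' = \<theta>}"

definition is_metric :: "('x \<Rightarrow> 'x \<Rightarrow> real) \<Rightarrow> bool" where
  "is_metric h \<longleftrightarrow>
     (\<forall>x y. h x y \<ge> 0) \<and> (\<forall>x y. h x y = 0 \<longleftrightarrow> x = y) \<and>
     (\<forall>x y. h x y = h y x) \<and> (\<forall>x y z. h x z \<le> h x y + h y z)"

definition metric_complete :: "('x \<Rightarrow> 'x \<Rightarrow> real) \<Rightarrow> bool" where
  "metric_complete h \<longleftrightarrow>
     (\<forall>u :: nat \<Rightarrow> 'x. (\<forall>e>0. \<exists>N. \<forall>m\<ge>N. \<forall>n\<ge>N. h (u m) (u n) < e)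
        \<longrightarrow> (\<exists>l. (\<lambda>n. h (u n) l) \<longlonglongrightarrow> 0))"

definition metric_separable :: "('x \<Rightarrow> 'x \<Rightarrow> real) \<Rightarrow> bool" where
  "metric_separable h \<longleftrightarrow>
     (\<exists>D. countable D \<and> (\<forall>x. \<forall>e>0. \<exists>d\<in>D. h x d < e))"

definition L_space ::
  "('x \<Rightarrow> 'x \<Rightarrow> 'x) \<Rightarrow> (real \<Rightarrow> 'x \<Rightarrow> 'x) \<Rightarrow> 'x \<Rightarrow> ('x \<Rightarrow> 'x \<Rightarrow> real) \<Rightarrow> bool" where
  "L_space add smul \<theta> h \<longleftrightarrow>
     semilinear_space add smul \<theta> \<and> is_metric h \<and> metric_complete h \<and> metric_separable h \<and>
     (\<forall>a x y. h (smul a x) (smul a y) = \<bar>a\<bar> * h x y) \<and>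
     (\<forall>x y z. h (add x z) (add y z) \<le> h x y)"

definition isotropic :: "('x \<Rightarrow> 'x \<Rightarrow> 'x) \<Rightarrow> ('x \<Rightarrow> 'x \<Rightarrow> real) \<Rightarrow> bool" where
  "isotropic add h \<longleftrightarrow> (\<forall>x y z. h (add x z) (add y z) = h x y)"

definition convexifying_operator ::
  "('x \<Rightarrow> 'x \<Rightarrow> 'x) \<Rightarrow> (real \<Rightarrow> 'x \<Rightarrow> 'x) \<Rightarrow> ('x \<Rightarrow> 'x \<Rightarrow> real) \<Rightarrow> ('x \<Rightarrow> 'x) \<Rightarrow> bool" where
  "convexifying_operator add smul h P \<longleftrightarrow>
     range P = convex_elems add smul \<and>
     (\<forall>x y. h (P x) (P y) \<le> h x y) \<and>
     (\<forall>x. P (P x) = P x) \<and>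
     (\<forall>x y a b. P (add (smul a x) (smul b y)) = add (smul a (P x)) (smul b (P y)))"

definition sumX :: "('x \<Rightarrow> 'x \<Rightarrow> 'x) \<Rightarrow> 'x \<Rightarrow> ('v \<Rightarrow> 'x) \<Rightarrow> 'v set \<Rightarrow> 'x" where
  "sumX add \<theta> g A = Finite_Set.fold (\<lambda>v acc. add (g v) acc) \<theta> A"

definition simple_X :: "'t measure \<Rightarrow> ('t \<Rightarrow> 'x) \<Rightarrow> bool" where
  "simple_X M f \<longleftrightarrow> finite (f ` space M) \<and> (\<forall>v. f -` {v} \<inter> space M \<in> sets M)"

definition simple_integral_X ::
  "('x \<Rightarrow> 'x \<Rightarrow> 'x) \<Rightarrow> (real \<Rightarrow> 'x \<Rightarrow> 'x) \<Rightarrow> 'x \<Rightarrow> ('x \<Rightarrow> 'x) \<Rightarrow> 't measure \<Rightarrow> ('t \<Rightarrow> 'x) \<Rightarrow> 'x" where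
  "simple_integral_X add smul \<theta> P M f =
     sumX add \<theta> (\<lambda>v. smul (measure M (f -` {v} \<inter> space M)) (P v)) (f ` space M)"

definition integral_limit_X ::
  "('x \<Rightarrow> 'x \<Rightarrow> 'x) \<Rightarrow> (real \<Rightarrow> 'x \<Rightarrow> 'x) \<Rightarrow> 'x \<Rightarrow> ('x \<Rightarrow> 'x \<Rightarrow> real) \<Rightarrow> ('x \<Rightarrow> 'x)
    \<Rightarrow> 't measure \<Rightarrow> ('t \<Rightarrow> 'x) \<Rightarrow> 'x \<Rightarrow> bool" where
  "integral_limit_X add smul \<theta> h P M f I \<longleftrightarrow>
     (\<forall>g :: nat \<Rightarrow> 't \<Rightarrow> 'x.
        (\<forall>n. simple_X M (g n)) \<longrightarrow>
        (\<exists>C. \<forall>n. \<forall>s\<in>space M. h (g n s) \<theta> \<le> C) \<longrightarrow>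
        (AE s in M. (\<lambda>n. h (g n s) (f s)) \<longlonglongrightarrow> 0) \<longrightarrow>
        (\<lambda>n. h (simple_integral_X add smul \<theta> P M (g n)) I) \<longlonglongrightarrow> 0)"

definition integral_X ::
  "('x \<Rightarrow> 'x \<Rightarrow> 'x) \<Rightarrow> (real \<Rightarrow> 'x \<Rightarrow> 'x) \<Rightarrow> 'x \<Rightarrow> ('x \<Rightarrow> 'x \<Rightarrow> real) \<Rightarrow> ('x \<Rightarrow> 'x)
    \<Rightarrow> 't measure \<Rightarrow> ('t \<Rightarrow> 'x) \<Rightarrow> 'x" where
  "integral_X add smul \<theta> h P M f = (THE I. integral_limit_X add smul \<theta> h P M f I)"

definition set_integral_X ::
  "('x \<Rightarrow> 'x \<Rightarrow> 'x) \<Rightarrow> (real \<Rightarrow> 'x \<Rightarrow> 'x) \<Rightarrow> 'x \<Rightarrow> ('x \<Rightarrow> 'x \<Rightarrow> real) \<Rightarrow> ('x \<Rightarrow> 'x)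
    \<Rightarrow> 't measure \<Rightarrow> 't set \<Rightarrow> ('t \<Rightarrow> 'x) \<Rightarrow> 'x" where
  "set_integral_X add smul \<theta> h P M Q f =
     integral_X add smul \<theta> h P M (\<lambda>s. if s \<in> Q then f s else \<theta>)"

definition modulus_of_continuity :: "(real \<Rightarrow> real) \<Rightarrow> bool" where
  "modulus_of_continuity \<omega> \<longleftrightarrow>
     mono_on {0..} \<omega> \<and> continuous_on {0..} \<omega> \<and> (\<forall>a\<ge>0. \<omega> a \<ge> 0) \<and> \<omega> 0 = 0 \<and>
     (\<forall>a\<ge>0. \<forall>b\<ge>0. \<omega> (a + b) \<le> \<omega> a + \<omega> b)"

definition H_omega :: "(real \<Rightarrow> real) \<Rightarrow> ('x \<Rightarrow> 'x \<Rightarrow> real) \<Rightarrow> ('t::metric_space \<Rightarrow> 'x) set" where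
  "H_omega \<omega> h = {f. \<forall>s t. h (f s) (f t) \<le> \<omega> (dist s t)}"

end

theory Submission
  imports Defs
begin

lemma bounded_dist:
  assumes T: "compact (UNIV :: 't::metric_space set)"
  shows "\<exists>B. \<forall>s. dist (t::'t) s \<le> B"
proof -
  have "bounded (UNIV :: 't set)" by (rule compact_imp_bounded[OF T])
  then have "\<exists>e. \<forall>y\<in>(UNIV :: 't set). dist t y \<le> e" by (simp only: bounded_any_center[of _ t])
  then show ?thesis by simp
qed

lemma null_cmp:
  fixes a b :: "nat \<Rightarrow> real"
  assumes "\<And>n. norm (a n) \<le> b n" "b \<longlonglongrightarrow> 0"
  shows "a \<longlonglongrightarrow> 0"
  using Lim_null_comparison[of a b sequentially] assms by (simp add: always_eventually)

locale LS =
  fixes add :: "'x \<Rightarrow> 'x \<Rightarrow> 'x" and smul :: "real \<Rightarrow> 'x \<Rightarrow> 'x" and \<theta> :: 'x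
    and h :: "'x \<Rightarrow> 'x \<Rightarrow> real" and P :: "'x \<Rightarrow> 'x"
  assumes X: "L_space add smul \<theta> h"
    and PP: "convexifying_operator add smul h P"
begin

lemma comm: "add x y = add y x" and assoc: "add x (add y z) = add (add x y) z"
  and neut: "add x \<theta> = x" and distr: "smul a (add x y) = add (smul a x) (smul a y)"
  and smul_smul: "smul a (smul b x) = smul (a * b) x" and smul1: "smul 1 x = x"
  and smul0: "smul 0 x = \<theta>"
  using X unfolding L_space_def semilinear_space_def by blast+

lemma hmet: "is_metric h" using X unfolding L_space_def by simp

lemma hpos: "h x y \<ge> 0" using hmet unfolding is_metric_def by simp
lemma heq: "h x y = 0 \<longleftrightarrow> x = y" using hmet unfolding is_metric_def by simp
lemma hsym: "h x y = h y x" using hmet unfolding is_metric_def by simp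
lemma htri: "h x z \<le> h x y + h y z" using hmet unfolding is_metric_def by simp
lemma hzero[simp]: "h x x = 0" using heq by simp

lemma hscale: "h (smul a x) (smul a y) = \<bar>a\<bar> * h x y"
  and htrans: "h (add x z) (add y z) \<le> h x y"
  and hcomplete: "metric_complete h"
  using X unfolding L_space_def by auto

lemma Prange: "range P = convex_elems add smul" and Pcontr: "h (P x) (P y) \<le> h x y"
  and PP_idem: "P (P x) = P x"
  and Plin: "P (add (smul a x) (smul b y)) = add (smul a (P x)) (smul b (P y))"
  using PP unfolding convexifying_operator_def by auto

lemma neut_left: "add \<theta> x = x" using comm neut by metis

lemma smul_theta: "smul a \<theta> = \<theta>"
  by (metis smul0 smul_smul mult_zero_right)

lemma P_theta: "P \<theta> = \<theta>"
proof -
  have "P (add (smul 0 \<theta>) (smul 0 \<theta>)) = add (smul 0 (P \<theta>)) (smul 0 (P \<theta>))" by (rule Plin)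
  then show ?thesis by (simp add: smul0 neut)
qed

lemma P_convex: "P x \<in> convex_elems add smul" using Prange by auto

lemma convex_P: "x \<in> convex_elems add smul \<Longrightarrow> P x = x"
  using Prange PP_idem by (metis rangeE)

lemma convexD: "x \<in> convex_elems add smul \<Longrightarrow> a \<ge> 0 \<Longrightarrow> b \<ge> 0 \<Longrightarrow>
   smul (a + b) x = add (smul a x) (smul b x)"
  unfolding convex_elems_def by auto

lemma h_add: "h (add x1 x2) (add y1 y2) \<le> h x1 y1 + h x2 y2"
proof -
  have "h (add x1 x2) (add y1 x2) \<le> h x1 y1" by (rule htrans)
  moreover have "h (add y1 x2) (add y1 y2) \<le> h x2 y2" using htrans[of x2 y1 y2] by (simp add: comm)
  ultimately show ?thesis using htri[of "add x1 x2" "add y1 y2" "add y1 x2"] by linarith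
qed

lemma hscale_theta: "h (smul a x) \<theta> = \<bar>a\<bar> * h x \<theta>"
  using hscale[of a x \<theta>] by (simp add: smul_theta)

sublocale S: comm_monoid_set add \<theta>
  by unfold_locales (rule assoc[symmetric] comm neut_left neut)+

lemma sumX_eq: "finite A \<Longrightarrow> sumX add \<theta> g A = S.F (\<lambda>v. g v) A"
  unfolding sumX_def S.eq_fold by (simp add: comp_def)

lemma smul_F: "smul a (S.F g A) = S.F (\<lambda>i. smul a (g i)) A"
  by (induction A rule: infinite_finite_induct) (auto simp: smul_theta distr)

lemma convex_sum: "x \<in> convex_elems add smul \<Longrightarrow> (\<And>i. i \<in> A \<Longrightarrow> c i \<ge> 0) \<Longrightarrow>
   smul (\<Sum>i\<in>A. c i) x = S.F (\<lambda>i. smul (c i) x) A"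
proof (induction A rule: infinite_finite_induct)
  case (insert i A)
  then show ?case by (simp add: convexD sum_nonneg)
qed (auto simp: smul0)

lemma h_F: "h (S.F f A) (S.F g A) \<le> (\<Sum>i\<in>A. h (f i) (g i))"
proof (induction A rule: infinite_finite_induct)
  case (infinite A) then show ?case by simp
next
  case empty then show ?case by simp
next
  case (insert i A)
  then show ?case using h_add[of "f i" "S.F f A" "g i" "S.F g A"] by simp
qed

end

locale LSM = LS add smul \<theta> h P for add :: "'x \<Rightarrow> 'x \<Rightarrow> 'x" and smul :: "real \<Rightarrow> 'x \<Rightarrow> 'x" and \<theta> :: 'x
    and h :: "'x \<Rightarrow> 'x \<Rightarrow> real" and P :: "'x \<Rightarrow> 'x" +
  fixes M :: "'t::metric_space measure"
  assumes Mb: "sets M = sets borel" and Mf: "finite_measure M"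
begin

lemmas FM_integrable_const_bound = finite_measure.integrable_const_bound[OF Mf]
lemmas FM_finite_measure_finite_Union = finite_measure.finite_measure_finite_Union[OF Mf]

lemma spaceM: "space M = UNIV" by (metis Mb sets_eq_imp_space_eq space_borel)

lemma int_const: "integrable M (\<lambda>s. c::real)"
  by (rule FM_integrable_const_bound[where B="\<bar>c\<bar>"]) auto

lemma ind_int: "A \<in> sets M \<Longrightarrow> integrable M f \<Longrightarrow> integrable M (\<lambda>x. indicator A x * (f x::real))"
  using integrable_real_mult_indicator[of A M f] by (simp add: mult.commute)

abbreviation SI where "SI g \<equiv> simple_integral_X add smul \<theta> P M g"

lemma simple_XD: "simple_X M g \<longleftrightarrow> finite (range g) \<and> (\<forall>v. g -` {v} \<in> sets M)"
  unfolding simple_X_def spaceM by simp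

lemma real_simple_int:
  fixes \<psi> :: "'c \<Rightarrow> real"
  assumes fin: "finite (range key)" and meas: "\<And>c. key -` {c} \<in> sets M"
  shows "integral\<^sup>L M (\<lambda>s. \<psi> (key s)) = (\<Sum>c\<in>range key. measure M (key -` {c}) * \<psi> c)"
proof -
  have "integral\<^sup>L M (\<lambda>s. \<psi> (key s)) = integral\<^sup>L M (\<lambda>s. \<Sum>c\<in>range key. indicator (key -` {c}) s * \<psi> c)"
  proof (rule Bochner_Integration.integral_cong[OF refl])
    fix s
    have "(\<Sum>c\<in>range key. indicator (key -` {c}) s * \<psi> c) = (\<Sum>c\<in>range key. if c = key s then \<psi> c else 0)"
      by (intro sum.cong) (auto simp: indicator_def)
    also have "\<dots> = \<psi> (key s)" using fin by (simp add: sum.delta')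
    finally show "\<psi> (key s) = (\<Sum>c\<in>range key. indicator (key -` {c}) s * \<psi> c)" by simp
  qed
  also have "\<dots> = (\<Sum>c\<in>range key. integral\<^sup>L M (\<lambda>s. indicator (key -` {c}) s * \<psi> c))"
    by (rule Bochner_Integration.integral_sum) (auto intro!: integrable_mult_left FM_integrable_const_bound[where B=1] borel_measurable_indicator meas)
  also have "\<dots> = (\<Sum>c\<in>range key. measure M (key -` {c}) * \<psi> c)"
    by (intro sum.cong refl) (simp add: spaceM)
  finally show ?thesis .
qed

lemma SI_key:
  assumes fin: "finite (range key)" and meas: "\<And>c. key -` {c} \<in> sets M"
    and g: "\<And>s. g s = \<phi> (key s)"
  shows "SI g = S.F (\<lambda>c. smul (measure M (key -` {c})) (P (\<phi> c))) (range key)"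
proof -
  have gr: "range g = \<phi> ` range key" using g by auto
  have "SI g = S.F (\<lambda>v. smul (measure M (g -` {v})) (P v)) (range g)"
    unfolding simple_integral_X_def spaceM using fin gr by (simp add: sumX_eq)
  also have "\<dots> = S.F (\<lambda>v. S.F (\<lambda>c. smul (measure M (key -` {c})) (P (\<phi> c))) {c. c \<in> range key \<and> \<phi> c = v}) (\<phi> ` range key)"
    unfolding gr
  proof (rule S.cong[OF refl])
    fix v assume v: "v \<in> \<phi> ` range key"
    let ?C = "{c. c \<in> range key \<and> \<phi> c = v}"
    have finC: "finite ?C" using fin by auto
    have "g -` {v} = (\<Union>c\<in>?C. key -` {c})" using g by auto
    then have "measure M (g -` {v}) = (\<Sum>c\<in>?C. measure M (key -` {c}))"
      using finC meas by (auto intro!: FM_finite_measure_finite_Union simp: disjoint_family_on_def)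
    then have "smul (measure M (g -` {v})) (P v) = S.F (\<lambda>c. smul (measure M (key -` {c})) (P v)) ?C"
      using convex_sum[OF P_convex, of ?C] by simp
    also have "\<dots> = S.F (\<lambda>c. smul (measure M (key -` {c})) (P (\<phi> c))) ?C"
      by (rule S.cong) auto
    finally show "smul (measure M (g -` {v})) (P v) = \<dots>" .
  qed
  also have "\<dots> = S.F (\<lambda>c. smul (measure M (key -` {c})) (P (\<phi> c))) (range key)"
    by (rule S.image_gen[symmetric]) (rule fin)
  finally show ?thesis .
qed

lemma simple_pair:
  assumes "simple_X M g1" "simple_X M g2"
  shows "finite (range (\<lambda>s. (g1 s, g2 s)))" "\<And>c. (\<lambda>s. (g1 s, g2 s)) -` {c} \<in> sets M"
proof -
  have "range (\<lambda>s. (g1 s, g2 s)) \<subseteq> range g1 \<times> range g2" by auto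
  then show "finite (range (\<lambda>s. (g1 s, g2 s)))" using assms unfolding simple_XD
    by (meson finite_SigmaI finite_subset)
  fix c
  have "(\<lambda>s. (g1 s, g2 s)) -` {c} = g1 -` {fst c} \<inter> g2 -` {snd c}" by (cases c) auto
  then show "(\<lambda>s. (g1 s, g2 s)) -` {c} \<in> sets M" using assms unfolding simple_XD by auto
qed

lemma h_SI:
  assumes g1: "simple_X M g1" and g2: "simple_X M g2"
  shows "h (SI g1) (SI g2) \<le> integral\<^sup>L M (\<lambda>s. h (g1 s) (g2 s))"
proof -
  let ?k = "\<lambda>s. (g1 s, g2 s)"
  note kf = simple_pair[OF g1 g2]
  let ?m = "\<lambda>c. measure M (?k -` {c})"
  have e1: "SI g1 = S.F (\<lambda>c. smul (?m c) (P (fst c))) (range ?k)"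
    by (rule SI_key[OF kf]) simp
  have e2: "SI g2 = S.F (\<lambda>c. smul (?m c) (P (snd c))) (range ?k)"
    by (rule SI_key[OF kf]) simp
  have "h (SI g1) (SI g2) \<le> (\<Sum>c\<in>range ?k. h (smul (?m c) (P (fst c))) (smul (?m c) (P (snd c))))"
    unfolding e1 e2 by (rule h_F)
  also have "\<dots> \<le> (\<Sum>c\<in>range ?k. ?m c * h (fst c) (snd c))"
    by (intro sum_mono) (simp add: hscale mult_left_mono Pcontr)
  also have "\<dots> = integral\<^sup>L M (\<lambda>s. (\<lambda>c. h (fst c) (snd c)) (?k s))"
    by (rule real_simple_int[OF kf, symmetric])
  finally show ?thesis by simp
qed


lemma simple_fun: "simple_X M g \<Longrightarrow> simple_function M g"
  unfolding simple_XD simple_function_def spaceM by auto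

lemma meas_h: "simple_X M g1 \<Longrightarrow> simple_X M g2 \<Longrightarrow> (\<lambda>s. h (g1 s) (g2 s)) \<in> borel_measurable M"
proof -
  assume g1: "simple_X M g1" and g2: "simple_X M g2"
  note kf = simple_pair[OF g1 g2]
  have "simple_function M (\<lambda>s. (g1 s, g2 s))"
    unfolding simple_function_def spaceM using kf by auto
  then have "simple_function M ((\<lambda>c. h (fst c) (snd c)) \<circ> (\<lambda>s. (g1 s, g2 s)))"
    by (rule simple_function_compose)
  then show ?thesis by (auto dest: borel_measurable_simple_function simp: comp_def)
qed

lemma int_h_bound:
  assumes "simple_X M g1" "simple_X M g2" "\<And>s. h (g1 s) (g2 s) \<le> B"
  shows "integral\<^sup>L M (\<lambda>s. h (g1 s) (g2 s)) \<le> measure M UNIV * B"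
proof -
  have B0: "B \<ge> 0" using assms(3)[of undefined] hpos[of "g1 undefined" "g2 undefined"] by linarith
  have "integral\<^sup>L M (\<lambda>s. h (g1 s) (g2 s)) \<le> integral\<^sup>L M (\<lambda>s. B)"
    using assms hpos B0
    by (intro integral_mono FM_integrable_const_bound[where B=B] meas_h AE_I2) auto
  then show ?thesis by (simp add: spaceM)
qed

lemma integral_exists:
  assumes g: "\<And>n. simple_X M (g n)" and bound: "\<And>n s. h (g n s) \<theta> \<le> C"
    and conv: "AE s in M. (\<lambda>n. h (g n s) (F s)) \<longlonglongrightarrow> 0"
    and lim: "(\<lambda>n. h (SI (g n)) I) \<longlonglongrightarrow> 0"
  shows "integral_limit_X add smul \<theta> h P M F I"
  unfolding integral_limit_X_def
proof (intro allI impI)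
  fix g' :: "nat \<Rightarrow> 't \<Rightarrow> 'x"
  assume g': "\<forall>n. simple_X M (g' n)" and "\<exists>C. \<forall>n. \<forall>s\<in>space M. h (g' n s) \<theta> \<le> C"
    and conv': "AE s in M. (\<lambda>n. h (g' n s) (F s)) \<longlonglongrightarrow> 0"
  then obtain C' where C': "\<And>n s. h (g' n s) \<theta> \<le> C'" by (auto simp: spaceM)
  have bd: "h (g' n s) (g n s) \<le> C' + C" for n s
    using htri[of "g' n s" "g n s" \<theta>] C'[of n s] bound[of n s] hsym[of \<theta> "g n s"] by linarith
  have dct: "(\<lambda>n. integral\<^sup>L M (\<lambda>s. h (g' n s) (g n s))) \<longlonglongrightarrow> integral\<^sup>L M (\<lambda>s. 0)"
  proof (rule integral_dominated_convergence[where w="\<lambda>s. C' + C"])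
    show "(\<lambda>s. 0::real) \<in> borel_measurable M" by simp
    show "(\<lambda>s. h (g' n s) (g n s)) \<in> borel_measurable M" for n using g g' meas_h by auto
    show "integrable M (\<lambda>s. C' + C)" by (rule FM_integrable_const_bound[where B="\<bar>C' + C\<bar>"]) auto
    show "AE s in M. norm (h (g' n s) (g n s)) \<le> C' + C" for n using bd hpos by simp
    show "AE s in M. (\<lambda>n. h (g' n s) (g n s)) \<longlonglongrightarrow> 0"
      using conv conv'
    proof eventually_elim
      case (elim s)
      have l2: "(\<lambda>n. h (g' n s) (F s) + h (g n s) (F s)) \<longlonglongrightarrow> 0" using tendsto_add[OF elim(2) elim(1)] by simp
      have b2: "norm (h (g' n s) (g n s)) \<le> h (g' n s) (F s) + h (g n s) (F s)" for n
        using htri[of "g' n s" "g n s" "F s"] hsym[of "F s" "g n s"] hpos[of "g' n s" "g n s"] by simp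
      show ?case by (rule null_cmp[OF b2 l2])
    qed
  qed
  have l3: "(\<lambda>n. integral\<^sup>L M (\<lambda>s. h (g' n s) (g n s)) + h (SI (g n)) I) \<longlonglongrightarrow> 0"
    using tendsto_add[OF dct lim] by simp
  have b3: "norm (h (SI (g' n)) I) \<le> integral\<^sup>L M (\<lambda>s. h (g' n s) (g n s)) + h (SI (g n)) I" for n
    using htri[of "SI (g' n)" I "SI (g n)"] h_SI[of "g' n" "g n"] g g' hpos[of "SI (g' n)" I] by simp
  show "(\<lambda>n. h (SI (g' n)) I) \<longlonglongrightarrow> 0" by (rule null_cmp[OF b3 l3])
qed

lemma limit_unique:
  assumes "(\<lambda>n. h (u n) I) \<longlonglongrightarrow> 0" "(\<lambda>n. h (u n) I') \<longlonglongrightarrow> 0"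
  shows "I = I'"
proof -
  have "(\<lambda>n. h (u n) I + h (u n) I') \<longlonglongrightarrow> 0" using tendsto_add[OF assms] by simp
  moreover have "h I I' \<le> h (u n) I + h (u n) I'" for n using htri[of I I' "u n"] hsym[of I "u n"] by simp
  ultimately have "h I I' \<le> 0"
    by (intro tendsto_le[OF _ _ tendsto_const]) (auto intro: always_eventually)
  then show ?thesis using hpos[of I I'] heq by simp
qed

lemma integral_char:
  assumes g: "\<And>n. simple_X M (g n)" and bound: "\<And>n s. h (g n s) \<theta> \<le> C"
    and unif: "\<And>n s. h (g n s) (F s) \<le> e n" and e: "e \<longlonglongrightarrow> 0"
  shows "(\<lambda>n. h (SI (g n)) (integral_X add smul \<theta> h P M F)) \<longlonglongrightarrow> 0"
proof -
  define \<mu> where "\<mu> = measure M UNIV"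
  have mu0: "\<mu> \<ge> 0" unfolding \<mu>_def by simp
  have cauchy: "\<forall>\<epsilon>>0. \<exists>N. \<forall>m\<ge>N. \<forall>n\<ge>N. h (SI (g m)) (SI (g n)) < \<epsilon>"
  proof (intro allI impI)
    fix \<epsilon> :: real assume ep: "\<epsilon> > 0"
    have "\<epsilon> / (2 * (\<mu> + 1)) > 0" using ep mu0 by simp
    then obtain N where N: "\<And>n. n \<ge> N \<Longrightarrow> \<bar>e n\<bar> < \<epsilon> / (2 * (\<mu> + 1))"
      using e unfolding LIMSEQ_def by (metis dist_real_def diff_zero)
    show "\<exists>N. \<forall>m\<ge>N. \<forall>n\<ge>N. h (SI (g m)) (SI (g n)) < \<epsilon>"
    proof (intro exI allI impI)
      fix m n assume mn: "m \<ge> N" "n \<ge> N"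
      have b: "h (g m s) (g n s) \<le> e m + e n" for s
        using htri[of "g m s" "g n s" "F s"] unif[of m s] unif[of n s] hsym[of "F s" "g n s"] by simp
      have "h (SI (g m)) (SI (g n)) \<le> \<mu> * (e m + e n)"
        using h_SI[OF g g] int_h_bound[OF g g b] unfolding \<mu>_def by (meson order_trans)
      also have "\<dots> \<le> \<mu> * (\<epsilon> / (2 * (\<mu> + 1)) + \<epsilon> / (2 * (\<mu> + 1)))"
        using N[OF mn(1)] N[OF mn(2)] mu0 by (intro mult_left_mono) auto
      also have "\<dots> = \<epsilon> * (\<mu> / (\<mu> + 1))"
      proof -
        have "\<epsilon> / (2 * (\<mu> + 1)) + \<epsilon> / (2 * (\<mu> + 1)) = \<epsilon> / (\<mu> + 1)"
          using field_sum_of_halves[of "\<epsilon> / (\<mu> + 1)"] by (simp add: mult.commute)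
        then show ?thesis by simp
      qed
      also have "\<dots> < \<epsilon>"
      proof -
        have "\<mu> / (\<mu> + 1) < 1" using mu0 by simp
        then show ?thesis using ep mult_strict_left_mono[of "\<mu> / (\<mu> + 1)" 1 \<epsilon>] by simp
      qed
      finally show "h (SI (g m)) (SI (g n)) < \<epsilon>" .
    qed
  qed
  obtain I where I: "(\<lambda>n. h (SI (g n)) I) \<longlonglongrightarrow> 0"
    using hcomplete[unfolded metric_complete_def, rule_format, of "\<lambda>n. SI (g n)", OF cauchy[rule_format]] by blast
  have conv: "AE s in M. (\<lambda>n. h (g n s) (F s)) \<longlonglongrightarrow> 0"
  proof (rule AE_I2)
    fix s show "(\<lambda>n. h (g n s) (F s)) \<longlonglongrightarrow> 0"
      using unif hpos by (intro null_cmp[OF _ e]) simp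
  qed
  have il: "integral_limit_X add smul \<theta> h P M F I" by (rule integral_exists[OF g bound conv I])
  have "integral_X add smul \<theta> h P M F = I"
    unfolding integral_X_def
  proof (rule the_equality[where P="integral_limit_X add smul \<theta> h P M F", OF il])
    fix I' assume "integral_limit_X add smul \<theta> h P M F I'"
    then have "(\<lambda>n. h (SI (g n)) I') \<longlonglongrightarrow> 0" unfolding integral_limit_X_def
      using g bound conv by (auto simp: spaceM)
    then show "I' = I" using limit_unique[OF _ I] by blast
  qed
  then show ?thesis using I by simp
qed

end

lemma partition_exists:
  assumes T: "compact (UNIV :: 't::metric_space set)" and d: "\<delta> > 0"
  obtains p :: "'t::metric_space \<Rightarrow> 't" where "finite (range p)" "\<And>k. p -` {k} \<in> sets borel" "\<And>s. dist s (p s) < \<delta>"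
proof -
  have cov: "UNIV \<subseteq> (\<Union>c\<in>UNIV. ball c \<delta>)"
  proof
    fix x
    have "x \<in> ball x \<delta>" using d by simp
    then show "x \<in> (\<Union>c\<in>UNIV. ball c \<delta>)" by blast
  qed
  have op: "\<And>c. c \<in> UNIV \<Longrightarrow> open (ball c \<delta>)" by simp
  obtain K :: "'t set" where "K \<subseteq> UNIV" "finite K" "UNIV \<subseteq> (\<Union>c\<in>K. ball c \<delta>)"
    by (rule compactE_image[OF T op cov])
  then have K: "finite K" "UNIV \<subseteq> (\<Union>c\<in>K. ball c \<delta>)" by simp_all
  obtain ks where ks: "set ks = K" using finite_list[OF K(1)] by blast
  define idx where "idx s = (LEAST i. i < length ks \<and> dist (ks ! i) s < \<delta>)" for s
  have ex: "\<exists>i. i < length ks \<and> dist (ks ! i) s < \<delta>" for s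
  proof -
    obtain c where "c \<in> K" "s \<in> ball c \<delta>" using K(2) by blast
    then show ?thesis using ks by (auto simp: in_set_conv_nth)
  qed
  have idx: "idx s < length ks \<and> dist (ks ! idx s) s < \<delta>" for s
    unfolding idx_def by (rule LeastI_ex[OF ex])
  have meas: "idx \<in> measurable borel (count_space UNIV)"
    unfolding idx_def
  proof (rule measurable_Least)
    fix i
    let ?Pi = "\<lambda>x. i < length ks \<and> dist (ks ! i) x < \<delta>"
    have bT: "?Pi -` {True} = (if i < length ks then ball (ks ! i) \<delta> else {})" by (auto simp: ball_def)
    have bF: "?Pi -` {False} = UNIV - (if i < length ks then ball (ks ! i) \<delta> else {})" by (auto simp: ball_def)
    have "?Pi -` {b} \<in> sets borel" for b
      by (cases b) (simp_all only: bT bF, auto)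
    then show "?Pi \<in> measurable borel (count_space UNIV)"
      by (subst measurable_count_space_eq2_countable) auto
  qed
  define p where "p s = ks ! idx s" for s
  show ?thesis
  proof
    show "finite (range p)"
    proof (rule finite_subset[OF _ K(1)])
      show "range p \<subseteq> K" using idx ks unfolding p_def by auto
    qed
    fix k
    have "p -` {k} = idx -` {i. ks ! i = k} \<inter> space borel" unfolding p_def by auto
    then show "p -` {k} \<in> sets borel" using measurable_sets[OF meas, of "{i. ks ! i = k}"] by simp
  next
    fix s show "dist s (p s) < \<delta>" using idx[of s] unfolding p_def by (simp add: dist_commute)
  qed
qed

lemma omega_nonneg: "modulus_of_continuity \<omega> \<Longrightarrow> a \<ge> 0 \<Longrightarrow> \<omega> a \<ge> 0"
  unfolding modulus_of_continuity_def by auto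

lemma omega_mono: "modulus_of_continuity \<omega> \<Longrightarrow> 0 \<le> a \<Longrightarrow> a \<le> b \<Longrightarrow> \<omega> a \<le> \<omega> b"
  unfolding modulus_of_continuity_def mono_on_def by auto

lemma omega_lim: "modulus_of_continuity \<omega> \<Longrightarrow> (\<lambda>n. \<omega> (inverse (real (Suc n)))) \<longlonglongrightarrow> 0"
proof -
  assume w: "modulus_of_continuity \<omega>"
  then have c: "continuous_on {0..} \<omega>" and z: "\<omega> 0 = 0" unfolding modulus_of_continuity_def by auto
  have "(\<lambda>n. \<omega> (inverse (real (Suc n)))) \<longlonglongrightarrow> \<omega> 0"
    by (rule continuous_on_tendsto_compose[OF c LIMSEQ_inverse_real_of_nat]) auto
  then show ?thesis using z by simp
qed

lemma omega_cont: "modulus_of_continuity \<omega> \<Longrightarrow> continuous_on UNIV (\<lambda>s. \<omega> (dist t s))"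
proof -
  assume w: "modulus_of_continuity \<omega>"
  then have c: "continuous_on {0..} \<omega>" unfolding modulus_of_continuity_def by auto
  show ?thesis
    by (rule continuous_on_compose2[OF c]) (auto intro: continuous_intros)
qed

lemma omega_diff: "modulus_of_continuity \<omega> \<Longrightarrow> 0 \<le> a \<Longrightarrow> 0 \<le> b \<Longrightarrow> \<bar>\<omega> a - \<omega> b\<bar> \<le> \<omega> \<bar>a - b\<bar>"
proof -
  assume w: "modulus_of_continuity \<omega>" and a: "0 \<le> a" and b: "0 \<le> b"
  have sub: "\<forall>a\<ge>0. \<forall>b\<ge>0. \<omega> (a + b) \<le> \<omega> a + \<omega> b" using w unfolding modulus_of_continuity_def by auto
  have 1: "\<omega> x - \<omega> y \<le> \<omega> \<bar>x - y\<bar>" if "0 \<le> y" "y \<le> x" for x y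
    using sub[rule_format, of y "x - y"] that by simp
  have 2: "\<omega> y \<le> \<omega> x" if "0 \<le> y" "y \<le> x" for x y using omega_mono[OF w] that by simp
  show ?thesis
  proof (cases "b \<le> a")
    case True then show ?thesis using 1[of b a] 2[of b a] a b by simp
  next
    case False then show ?thesis using 1[of a b] 2[of a b] a b by (simp add: abs_minus_commute)
  qed
qed

lemma H_omegaD: "f \<in> H_omega \<omega> h \<Longrightarrow> h (f s) (f s') \<le> \<omega> (dist s s')"
  unfolding H_omega_def by auto

context LSM begin

lemma simple_fun_X:
  assumes sf: "simple_function M g" shows "simple_X M g"
  unfolding simple_XD
proof (intro conjI allI)
  show "finite (range g)" using sf unfolding simple_function_def spaceM by simp
  fix v show "g -` {v} \<in> sets M"
  proof (cases "v \<in> range g")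
    case True then show ?thesis using sf unfolding simple_function_def spaceM by auto
  next
    case False then have "g -` {v} = {}" by auto
    then show ?thesis by simp
  qed
qed

lemma simple_if:
  assumes p: "finite (range p)" "\<And>k. p -` {k} \<in> sets M" and Q: "Q \<in> sets M"
  shows "simple_X M (\<lambda>s. if s \<in> Q then \<phi> (p s) else \<theta>)"
proof -
  let ?k = "\<lambda>s. (p s, s \<in> Q)"
  have "range ?k \<subseteq> range p \<times> UNIV" by auto
  have fk: "finite (range ?k)" by (rule finite_subset[of _ "range p \<times> (UNIV::bool set)"]) (auto simp: p(1))
  have mk: "?k -` {c} \<in> sets M" for c
  proof (cases c)
    case (Pair a b)
    have "?k -` {c} = p -` {a} \<inter> (if b then Q else UNIV - Q)" using Pair by auto
    then show ?thesis using p(2)[of a] Q by (auto simp: spaceM[symmetric])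
  qed
  have "simple_function M ?k" unfolding simple_function_def spaceM using fk mk by auto
  then have "simple_function M ((\<lambda>c. if snd c then \<phi> (fst c) else \<theta>) \<circ> ?k)"
    by (rule simple_function_compose)
  moreover have "(\<lambda>c. if snd c then \<phi> (fst c) else \<theta>) \<circ> ?k = (\<lambda>s. if s \<in> Q then \<phi> (p s) else \<theta>)"
    by (rule ext) simp
  ultimately have "simple_function M (\<lambda>s. if s \<in> Q then \<phi> (p s) else \<theta>)" by simp
  then show ?thesis by (rule simple_fun_X)
qed

lemma H_bounded:
  assumes T: "compact (UNIV :: 't set)" and w: "modulus_of_continuity \<omega>" and f: "(f :: 't \<Rightarrow> 'x) \<in> H_omega \<omega> h"
  obtains C where "\<And>s. h (f s) \<theta> \<le> C" "C \<ge> 0"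
proof -
  obtain B where B: "\<And>s::'t. dist s undefined \<le> B"
    using bounded_dist[OF T, of undefined] by (auto simp: dist_commute)
  have hb: "h (f s) \<theta> \<le> \<omega> B + h (f undefined) \<theta>" for s
  proof -
    have "h (f s) \<theta> \<le> h (f s) (f undefined) + h (f undefined) \<theta>" by (rule htri)
    moreover have "h (f s) (f undefined) \<le> \<omega> B"
      using H_omegaD[OF f, of s undefined] omega_mono[OF w, of "dist s undefined" B] B[of s]
      by simp
    ultimately show ?thesis by simp
  qed
  have h0: "\<omega> B + h (f undefined) \<theta> \<ge> 0" using hpos[of "f undefined" \<theta>] hb[of undefined]
    hpos[of "f undefined" \<theta>] by linarith
  show ?thesis by (rule that[OF hb h0])
qed

end


context LSM begin

lemma approx_seq:
  assumes T: "compact (UNIV :: 't set)"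
  obtains p :: "nat \<Rightarrow> 't \<Rightarrow> 't" where "\<And>n. finite (range (p n))" "\<And>n k. p n -` {k} \<in> sets M"
    "\<And>n s. dist s (p n s) < inverse (real (Suc n))"
proof -
  have "\<forall>n. \<exists>q :: 't \<Rightarrow> 't. finite (range q) \<and> (\<forall>k. q -` {k} \<in> sets M) \<and> (\<forall>s. dist s (q s) < inverse (real (Suc n)))"
  proof
    fix n
    have "inverse (real (Suc n)) > 0" by simp
    then obtain q :: "'t \<Rightarrow> 't" where "finite (range q)" "\<And>k. q -` {k} \<in> sets borel" "\<And>s. dist s (q s) < inverse (real (Suc n))"
      using partition_exists[OF T] by metis
    then show "\<exists>q :: 't \<Rightarrow> 't. finite (range q) \<and> (\<forall>k. q -` {k} \<in> sets M) \<and> (\<forall>s. dist s (q s) < inverse (real (Suc n)))"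
      using Mb by auto
  qed
  then obtain p where "\<forall>n. finite (range (p n)) \<and> (\<forall>k. p n -` {k} \<in> sets M) \<and> (\<forall>s. dist s (p n s) < inverse (real (Suc n)))"
    by metis
  then show ?thesis using that by blast
qed

lemma upper:
  assumes T: "compact (UNIV :: 't set)" and w: "modulus_of_continuity \<omega>"
    and Q: "Q \<in> sets M" and Qpos: "measure M Q > 0"
    and f: "f \<in> H_omega \<omega> h" and int: "set_integral_X add smul \<theta> h P M Q f = \<theta>"
  shows "h (P (f t)) \<theta> \<le> (LINT s:Q|M. \<omega> (dist t s)) / measure M Q"
proof -
  obtain p where p: "\<And>n. finite (range (p n))" "\<And>n k. p n -` {k} \<in> sets M"
    "\<And>n s. dist s (p n s) < inverse (real (Suc n))" using approx_seq[OF T] by metis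
  define F where "F s = (if s \<in> Q then f s else \<theta>)" for s
  define g where "g n s = (if s \<in> Q then f (p n s) else \<theta>)" for n s
  define e where "e n = \<omega> (inverse (real (Suc n)))" for n
  define L where "L = (LINT s:Q|M. \<omega> (dist t s))"
  obtain C where C: "\<And>s. h (f s) \<theta> \<le> C" "C \<ge> 0" using H_bounded[OF T w f] by metis
  have hzero: "h x x = 0" for x using heq by simp
  have gs: "simple_X M (g n)" for n unfolding g_def by (rule simple_if[OF p(1) p(2) Q])
  have gb: "h (g n s) \<theta> \<le> C" for n s using C unfolding g_def by (auto simp: hzero)
  have pd: "\<omega> (dist a (p n a)) \<le> e n" for n a
    unfolding e_def using omega_mono[OF w, of "dist a (p n a)"] p(3)[of a n] by simp
  have e0: "e n \<ge> 0" for n unfolding e_def by (rule omega_nonneg[OF w]) simp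
  have unif: "h (g n s) (F s) \<le> e n" for n s
  proof (cases "s \<in> Q")
    case True
    then show ?thesis using H_omegaD[OF f, of "p n s" s] pd[of s n] unfolding g_def F_def
      by (simp add: dist_commute)
  qed (simp add: g_def F_def hzero e0)
  have eL: "e \<longlonglongrightarrow> 0" unfolding e_def by (rule omega_lim[OF w])
  have IF: "integral_X add smul \<theta> h P M F = \<theta>" using int unfolding set_integral_X_def F_def .
  have lim: "(\<lambda>n. h (SI (g n)) \<theta>) \<longlonglongrightarrow> 0"
    using integral_char[OF gs gb unif eL] unfolding IF .
  define G where "G s = (if s \<in> Q then f t else \<theta>)" for s
  have Gs: "simple_X M G" unfolding G_def using simple_if[OF p(1) p(2) Q, of "\<lambda>_. f t" 0] by simp
  have Qne: "Q \<noteq> {}" using Qpos by auto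
  have vQ: "(\<lambda>s. s \<in> Q) -` {b} = (if b then Q else UNIV - Q)" for b by auto
  have SIG: "SI G = smul (measure M Q) (P (f t))"
  proof -
    have "SI G = S.F (\<lambda>b. smul (measure M ((\<lambda>s. s \<in> Q) -` {b})) (P (if b then f t else \<theta>))) (range (\<lambda>s. s \<in> Q))"
      by (rule SI_key) (auto simp: G_def vQ Q spaceM[symmetric])
    also have "\<dots> = S.F (\<lambda>b. smul (measure M ((\<lambda>s. s \<in> Q) -` {b})) (P (if b then f t else \<theta>))) {True}"
      by (rule S.mono_neutral_right) (use Qne in \<open>auto simp: P_theta smul_theta\<close>)
    also have "\<dots> = smul (measure M Q) (P (f t))" by (simp add: vQ)
    finally show ?thesis .
  qed
  obtain B where B: "\<And>s. dist t s \<le> B"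
    using bounded_dist[OF T, of t] by blast
  have am: "(\<lambda>s. \<omega> (dist t s)) \<in> borel_measurable M"
    using borel_measurable_continuous_onI[OF omega_cont[OF w]] measurable_cong_sets[OF Mb refl] by blast
  have aint: "integrable M (\<lambda>s. \<omega> (dist t s))"
  proof (rule FM_integrable_const_bound[where B="\<omega> B"])
    show "AE x in M. norm (\<omega> (dist t x)) \<le> \<omega> B"
      using omega_nonneg[OF w] omega_mono[OF w] B by (intro AE_I2) simp
  qed (rule am)
  have bnd: "h (SI G) (SI (g n)) \<le> L + e n * measure M Q" for n
  proof -
    have "h (SI G) (SI (g n)) \<le> integral\<^sup>L M (\<lambda>s. h (G s) (g n s))" by (rule h_SI[OF Gs gs])
    also have "\<dots> \<le> integral\<^sup>L M (\<lambda>s. indicator Q s * \<omega> (dist t s) + indicator Q s * e n)"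
    proof (rule integral_mono)
      show "integrable M (\<lambda>s. h (G s) (g n s))"
      proof (rule FM_integrable_const_bound[where B="2 * C"])
        show "AE x in M. norm (h (G x) (g n x)) \<le> 2 * C"
        proof (rule AE_I2)
          fix x
          have "h (G x) (g n x) \<le> h (G x) \<theta> + h \<theta> (g n x)" by (rule htri)
          moreover have "h (G x) \<theta> \<le> C" using C by (simp add: G_def hzero)
          moreover have "h \<theta> (g n x) \<le> C" using gb hsym by metis
          ultimately show "norm (h (G x) (g n x)) \<le> 2 * C" using hpos by simp
        qed
      qed (rule meas_h[OF Gs gs])
      show "integrable M (\<lambda>s. indicator Q s * \<omega> (dist t s) + indicator Q s * e n)"
        using aint Q by (intro Bochner_Integration.integrable_add ind_int int_const)
      fix s
      show "h (G s) (g n s) \<le> indicator Q s * \<omega> (dist t s) + indicator Q s * e n"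
      proof (cases "s \<in> Q")
        case True
        have "h (f t) (f (p n s)) \<le> h (f t) (f s) + h (f s) (f (p n s))" by (rule htri)
        moreover have "h (f t) (f s) \<le> \<omega> (dist t s)" by (rule H_omegaD[OF f])
        moreover have "h (f s) (f (p n s)) \<le> e n" using H_omegaD[OF f, of s "p n s"] pd[of s n] by simp
        ultimately show ?thesis using True by (simp add: G_def g_def)
      qed (simp add: G_def g_def hzero)
    qed
    also have "\<dots> = L + e n * measure M Q"
    proof -
      have "integral\<^sup>L M (\<lambda>s. indicator Q s * \<omega> (dist t s) + indicator Q s * e n)
          = integral\<^sup>L M (\<lambda>s. indicator Q s * \<omega> (dist t s)) + integral\<^sup>L M (\<lambda>s. indicator Q s * e n)"
        using aint Q by (intro Bochner_Integration.integral_add ind_int int_const)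
      moreover have "integral\<^sup>L M (\<lambda>s. indicator Q s * \<omega> (dist t s)) = L"
        unfolding L_def set_lebesgue_integral_def by simp
      moreover have "integral\<^sup>L M (\<lambda>s. indicator Q s * e n) = e n * measure M Q"
        using Q by (simp add: spaceM)
      ultimately show ?thesis by simp
    qed
    finally show ?thesis .
  qed
  have key: "h (SI G) \<theta> \<le> L"
  proof (rule tendsto_le[OF _ _ tendsto_const])
    have t1: "(\<lambda>n. e n * measure M Q) \<longlonglongrightarrow> 0" by (rule tendsto_mult_left_zero[OF eL])
    have "(\<lambda>n. L + e n * measure M Q + h (SI (g n)) \<theta>) \<longlonglongrightarrow> L + 0 + 0"
      by (intro tendsto_add tendsto_const t1 lim)
    then show "(\<lambda>n. L + e n * measure M Q + h (SI (g n)) \<theta>) \<longlonglongrightarrow> L" by simp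
    have hh: "h (SI G) \<theta> \<le> L + e n * measure M Q + h (SI (g n)) \<theta>" for n
      using htri[of "SI G" \<theta> "SI (g n)"] bnd[of n] by linarith
    show "\<forall>\<^sub>F n in sequentially. h (SI G) \<theta> \<le> L + e n * measure M Q + h (SI (g n)) \<theta>"
      by (rule always_eventually) (use hh in blast)
  qed simp
  have "h (SI G) \<theta> = measure M Q * h (P (f t)) \<theta>" unfolding SIG using hscale_theta by simp
  then show ?thesis using key Qpos unfolding L_def by (simp add: pos_le_divide_eq mult.commute)
qed

end


context LS begin

lemma convex_add: "x \<in> convex_elems add smul \<Longrightarrow> y \<in> convex_elems add smul \<Longrightarrow> add x y \<in> convex_elems add smul"
  unfolding convex_elems_def by (auto simp: distr S.assoc S.commute S.left_commute)

lemma convex_smul: "x \<in> convex_elems add smul \<Longrightarrow> c \<ge> 0 \<Longrightarrow> smul c x \<in> convex_elems add smul"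
proof -
  assume x: "x \<in> convex_elems add smul" and c: "c \<ge> 0"
  show ?thesis unfolding convex_elems_def
  proof (intro CollectI allI impI)
    fix a b :: real assume ab: "a \<ge> 0" "b \<ge> 0"
    have "smul (a + b) (smul c x) = smul (a * c + b * c) x" by (simp add: smul_smul distrib_right)
    also have "\<dots> = add (smul (a * c) x) (smul (b * c) x)" using convexD[OF x] ab c by simp
    finally show "smul (a + b) (smul c x) = add (smul a (smul c x)) (smul b (smul c x))" by (simp add: smul_smul)
  qed
qed

lemma theta_convex: "\<theta> \<in> convex_elems add smul"
  unfolding convex_elems_def by (simp add: smul_theta neut)

lemma inv_unique: "add y1 x = \<theta> \<Longrightarrow> add y2 x = \<theta> \<Longrightarrow> y1 = y2"
  by (metis S.assoc S.commute neut)

end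

locale LSMI = LSM add smul \<theta> h P M for add :: "'x \<Rightarrow> 'x \<Rightarrow> 'x" and smul :: "real \<Rightarrow> 'x \<Rightarrow> 'x" and \<theta> :: 'x
    and h :: "'x \<Rightarrow> 'x \<Rightarrow> real" and P :: "'x \<Rightarrow> 'x" and M :: "'t::metric_space measure" +
  fixes e e' :: 'x
  assumes iso: "isotropic add h" and ec: "e \<in> convex_elems add smul" and inv: "add e e' = \<theta>"
    and he: "h e \<theta> = 1"
begin

lemma hiso: "h (add x z) (add y z) = h x y" using iso unfolding isotropic_def by auto

lemma e'c: "e' \<in> convex_elems add smul"
  unfolding convex_elems_def
proof (intro CollectI allI impI)
  fix a b :: real assume ab: "a \<ge> 0" "b \<ge> 0"
  have 1: "add (smul (a + b) e') (smul (a + b) e) = \<theta>"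
    by (metis distr inv S.commute smul_theta)
  have 2: "add (add (smul a e') (smul b e')) (smul (a + b) e) = \<theta>"
  proof -
    have "add (add (smul a e') (smul b e')) (smul (a + b) e) = add (add (smul a e') (smul a e)) (add (smul b e') (smul b e))"
      using convexD[OF ec ab] by (simp add: S.assoc S.commute S.left_commute)
    also have "\<dots> = \<theta>" by (metis distr inv S.commute smul_theta neut)
    finally show ?thesis .
  qed
  show "smul (a + b) e' = add (smul a e') (smul b e')" by (rule inv_unique[OF 1 2])
qed

lemma he': "h e' \<theta> = 1"
proof -
  have "h e' \<theta> = h (add e' e) (add \<theta> e)" by (rule hiso[symmetric])
  also have "\<dots> = h \<theta> e" using inv by (simp add: S.commute neut_left)
  finally show ?thesis using he hsym by simp
qed

definition phi :: "real \<Rightarrow> 'x" where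
  "phi x = add (smul (max x 0) e) (smul (max (- x) 0) e')"

lemma phi0: "phi 0 = \<theta>" unfolding phi_def by (simp add: smul0 neut)

lemma phi_add: "phi (x + y) = add (phi x) (phi y)"
proof -
  define sp where "sp = max x 0 + max y 0 - max (x + y) 0"
  have sp0: "sp \<ge> 0" unfolding sp_def by simp
  have sp': "max (- x) 0 + max (- y) 0 = max (- (x + y)) 0 + sp" unfolding sp_def by simp
  have a: "smul (max x 0 + max y 0) e = add (smul (max (x + y) 0) e) (smul sp e)"
    using convexD[OF ec, of "max (x + y) 0" sp] sp0 unfolding sp_def by simp
  have b: "smul (max (- x) 0 + max (- y) 0) e' = add (smul (max (- (x + y)) 0) e') (smul sp e')"
    using convexD[OF e'c, of "max (- (x + y)) 0" sp] sp0 unfolding sp' by simp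
  have "add (phi x) (phi y) = add (smul (max x 0 + max y 0) e) (smul (max (- x) 0 + max (- y) 0) e')"
    unfolding phi_def using convexD[OF ec, of "max x 0" "max y 0"] convexD[OF e'c, of "max (- x) 0" "max (- y) 0"]
    by (simp add: S.assoc S.commute S.left_commute)
  also have "\<dots> = add (phi (x + y)) (smul sp (add e e'))"
    unfolding a b phi_def distr by (simp add: S.assoc S.commute S.left_commute)
  also have "\<dots> = phi (x + y)" by (simp add: inv smul_theta neut)
  finally show ?thesis by simp
qed

lemma h_phi0: "h (phi z) \<theta> = \<bar>z\<bar>"
proof (cases "z \<ge> 0")
  case True
  then have "phi z = smul z e" unfolding phi_def by (simp add: smul0 neut)
  then show ?thesis using hscale_theta he True by simp
next
  case False
  then have "phi z = smul (- z) e'" unfolding phi_def by (simp add: smul0 neut_left)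
  then show ?thesis using hscale_theta he' False by simp
qed

lemma h_phi: "h (phi x) (phi y) = \<bar>x - y\<bar>"
proof -
  have "h (phi x) (phi y) = h (add (phi x) (phi (- y))) (add (phi y) (phi (- y)))" by (rule hiso[symmetric])
  also have "\<dots> = h (phi (x - y)) (phi 0)" by (simp flip: phi_add)
  finally show ?thesis by (simp add: phi0 h_phi0)
qed

lemma phi_inj: "phi x = phi y \<Longrightarrow> x = y" using h_phi[of x y] heq by simp

lemma phi_convex: "phi x \<in> convex_elems add smul"
  unfolding phi_def by (intro convex_add convex_smul ec e'c) auto

lemma P_phi: "P (phi x) = phi x" by (rule convex_P[OF phi_convex])

lemma smul_phi: "c \<ge> 0 \<Longrightarrow> smul c (phi x) = phi (c * x)"
proof -
  assume c: "c \<ge> 0"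
  have "max (c * x) 0 = c * max x 0" "max (- (c * x)) 0 = c * max (- x) 0" using c
    using max_mult_distrib_left[of c x 0] max_mult_distrib_left[of c "- x" 0] by simp_all
  then show ?thesis unfolding phi_def distr by (simp add: smul_smul)
qed

lemma F_phi: "S.F (\<lambda>i. phi (w i)) A = phi (\<Sum>i\<in>A. w i)"
  by (induction A rule: infinite_finite_induct) (auto simp: phi0 phi_add)

lemma SI_phi:
  assumes g: "simple_X M g" and gb: "\<And>s. g s = phi (b s)"
  shows "SI g = phi (integral\<^sup>L M b)"
proof -
  have inj: "inj_on phi (range b)" using phi_inj by (meson inj_onI)
  have "phi ` range b = range g" using gb by auto
  then have fb: "finite (range b)" using g unfolding simple_XD by (metis finite_imageD inj)
  have vb: "b -` {c} = g -` {phi c}" for c using gb phi_inj by auto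
  have mb: "b -` {c} \<in> sets M" for c using g unfolding simple_XD vb by auto
  have "SI g = S.F (\<lambda>c. smul (measure M (b -` {c})) (P (phi c))) (range b)"
    by (rule SI_key[where key=b and \<phi>=phi, OF fb mb gb])
  also have "\<dots> = S.F (\<lambda>c. phi (measure M (b -` {c}) * c)) (range b)"
    by (simp add: P_phi smul_phi)
  also have "\<dots> = phi (\<Sum>c\<in>range b. measure M (b -` {c}) * c)" by (rule F_phi)
  also have "\<dots> = phi (integral\<^sup>L M b)"
    using real_simple_int[OF fb mb, of "\<lambda>c. c"] by simp
  finally show ?thesis .
qed

end


lemma dist_diff_le: "\<bar>dist t x - dist t y\<bar> \<le> dist x y"
proof -
  have "dist t x \<le> dist t y + dist y x" by (rule dist_triangle)
  moreover have "dist t y \<le> dist t x + dist x y" by (rule dist_triangle)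
  ultimately show ?thesis by (simp add: dist_commute abs_le_iff)
qed

lemma omega_dist: "modulus_of_continuity \<omega> \<Longrightarrow> \<bar>\<omega> (dist t x) - \<omega> (dist t y)\<bar> \<le> \<omega> (dist x y)"
  using omega_diff[of \<omega> "dist t x" "dist t y"] omega_mono[of \<omega> "\<bar>dist t x - dist t y\<bar>" "dist x y"] dist_diff_le[of t x y]
  by simp

context LSM begin

lemma simple_key:
  assumes p: "finite (range p)" "\<And>k. p -` {k} \<in> sets M" and Q: "Q \<in> sets M"
  shows "simple_function M (\<lambda>s. \<psi> (p s) (s \<in> Q))"
proof -
  let ?k = "\<lambda>s. (p s, s \<in> Q)"
  have "range ?k \<subseteq> range p \<times> UNIV" by auto
  have fk: "finite (range ?k)" by (rule finite_subset[of _ "range p \<times> (UNIV::bool set)"]) (auto simp: p(1))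
  have mk: "?k -` {c} \<in> sets M" for c
  proof (cases c)
    case (Pair a b)
    have "?k -` {c} = p -` {a} \<inter> (if b then Q else UNIV - Q)" using Pair by auto
    then show ?thesis using p(2)[of a] Q by (auto simp: spaceM[symmetric])
  qed
  have "simple_function M ?k" unfolding simple_function_def spaceM using fk mk by auto
  then have "simple_function M ((\<lambda>c. \<psi> (fst c) (snd c)) \<circ> ?k)"
    by (rule simple_function_compose)
  then show ?thesis by (simp add: comp_def)
qed

end

context LSMI begin

lemma lower:
  assumes T: "compact (UNIV :: 't set)" and w: "modulus_of_continuity \<omega>"
    and Q: "Q \<in> sets M" and Qpos: "measure M Q > 0"
  shows "\<exists>f \<in> H_omega \<omega> h. set_integral_X add smul \<theta> h P M Q f = \<theta> \<and>
     h (P (f t)) \<theta> = (LINT s:Q|M. \<omega> (dist t s)) / measure M Q"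
proof -
  define L where "L = (LINT s:Q|M. \<omega> (dist t s))"
  define c where "c = L / measure M Q"
  define a where "a s = \<omega> (dist t s)" for s
  define f where "f s = phi (a s - c)" for s
  have fH: "f \<in> H_omega \<omega> h" unfolding H_omega_def
  proof (intro CollectI allI)
    fix s s'
    show "h (f s) (f s') \<le> \<omega> (dist s s')" unfolding f_def h_phi a_def using omega_dist[OF w, of t s s'] by simp
  qed
  have a0: "a s \<ge> 0" for s unfolding a_def by (rule omega_nonneg[OF w]) simp
  have L0: "L \<ge> 0" unfolding L_def set_lebesgue_integral_def
    by (rule Bochner_Integration.integral_nonneg) (use a0 in \<open>simp add: a_def\<close>)
  have c0: "c \<ge> 0" unfolding c_def using L0 Qpos by simp
  have w0: "\<omega> 0 = 0" using w unfolding modulus_of_continuity_def by simp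
  have val: "h (P (f t)) \<theta> = c" unfolding f_def P_phi h_phi0 a_def using w0 c0 by simp
  obtain p where p: "\<And>n. finite (range (p n))" "\<And>n k. p n -` {k} \<in> sets M"
    "\<And>n s. dist s (p n s) < inverse (real (Suc n))" using approx_seq[OF T] by metis
  define F where "F s = (if s \<in> Q then f s else \<theta>)" for s
  define g where "g n s = (if s \<in> Q then f (p n s) else \<theta>)" for n s
  define e where "e n = \<omega> (inverse (real (Suc n)))" for n
  obtain C where C: "\<And>s. h (f s) \<theta> \<le> C" "C \<ge> 0" using H_bounded[OF T w fH] by metis
  have hzero: "h x x = 0" for x using heq by simp
  have gs: "simple_X M (g n)" for n unfolding g_def by (rule simple_if[OF p(1) p(2) Q])
  have gb: "h (g n s) \<theta> \<le> C" for n s using C unfolding g_def by (auto simp: hzero)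
  have pd: "\<omega> (dist a (p n a)) \<le> e n" for n a
    unfolding e_def using omega_mono[OF w, of "dist a (p n a)"] p(3)[of a n] by simp
  have e0: "e n \<ge> 0" for n unfolding e_def by (rule omega_nonneg[OF w]) simp
  have unif: "h (g n s) (F s) \<le> e n" for n s
  proof (cases "s \<in> Q")
    case True
    then show ?thesis using H_omegaD[OF fH, of "p n s" s] pd[of s n] unfolding g_def F_def
      by (simp add: dist_commute)
  qed (simp add: g_def F_def hzero e0)
  have eL: "e \<longlonglongrightarrow> 0" unfolding e_def by (rule omega_lim[OF w])
  define I where "I = set_integral_X add smul \<theta> h P M Q f"
  have limI: "(\<lambda>n. h (SI (g n)) I) \<longlonglongrightarrow> 0"
    using integral_char[OF gs gb unif eL] unfolding I_def set_integral_X_def F_def .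
  define b where "b n s = (if s \<in> Q then a (p n s) - c else 0)" for n s
  have gphi: "g n s = phi (b n s)" for n s unfolding g_def b_def f_def by (simp add: phi0)
  have SIg: "SI (g n) = phi (integral\<^sup>L M (b n))" for n by (rule SI_phi[OF gs gphi])
  obtain B where B: "\<And>s. dist t s \<le> B"
    using bounded_dist[OF T, of t] by blast
  have aB: "a s \<le> \<omega> B" for s unfolding a_def using omega_mono[OF w] B by simp
  have am: "a \<in> borel_measurable M"
    unfolding a_def using borel_measurable_continuous_onI[OF omega_cont[OF w]] measurable_cong_sets[OF Mb refl] by blast
  have aint: "integrable M a"
  proof (rule FM_integrable_const_bound[where B="\<omega> B"])
    show "AE x in M. norm (a x) \<le> \<omega> B" using a0 aB by (intro AE_I2) simp
  qed (rule am)
  define a' where "a' s = indicator Q s * (a s - c)" for s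
  have a'int: "integrable M a'" unfolding a'_def
    using aint Q by (intro ind_int Bochner_Integration.integrable_diff int_const)
  have a'0: "integral\<^sup>L M a' = 0"
  proof -
    have "integral\<^sup>L M a' = integral\<^sup>L M (\<lambda>s. indicator Q s * a s - indicator Q s * c)"
      unfolding a'_def by (simp add: right_diff_distrib)
    also have "\<dots> = integral\<^sup>L M (\<lambda>s. indicator Q s * a s) - integral\<^sup>L M (\<lambda>s. indicator Q s * c)"
      using aint Q by (intro Bochner_Integration.integral_diff ind_int int_const)
    also have "\<dots> = L - c * measure M Q"
      unfolding L_def set_lebesgue_integral_def a_def using Q by (simp add: spaceM)
    also have "\<dots> = 0" unfolding c_def using Qpos by simp
    finally show ?thesis .
  qed
  have bint: "integrable M (b n)" for n
  proof (rule FM_integrable_const_bound[where B="\<omega> B + c"])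
    have "simple_function M (\<lambda>s. (\<lambda>k q. if q then a k - c else 0) (p n s) (s \<in> Q))"
      by (rule simple_key[OF p(1) p(2) Q])
    moreover have "(\<lambda>s. (\<lambda>k q. if q then a k - c else 0) (p n s) (s \<in> Q)) = b n"
      by (rule ext) (simp add: b_def)
    ultimately have "simple_function M (b n)" by simp
    then show "b n \<in> borel_measurable M" by (rule borel_measurable_simple_function)
    show "AE x in M. norm (b n x) \<le> \<omega> B + c"
    proof (rule AE_I2)
      fix x
      have "0 \<le> a (p n x)" "a (p n x) \<le> \<omega> B" "0 \<le> a x" "a x \<le> \<omega> B" using a0 aB by auto
      then show "norm (b n x) \<le> \<omega> B + c" using c0 unfolding b_def by (simp add: abs_le_iff)
    qed
  qed
  have bb: "\<bar>integral\<^sup>L M (b n)\<bar> \<le> measure M UNIV * e n" for n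
  proof -
    have "\<bar>integral\<^sup>L M (b n)\<bar> = \<bar>integral\<^sup>L M (\<lambda>s. b n s - a' s)\<bar>"
      using Bochner_Integration.integral_diff[OF bint a'int] a'0 by simp
    also have "\<dots> \<le> integral\<^sup>L M (\<lambda>s. norm (b n s - a' s))"
      using integral_norm_bound[of M "\<lambda>s. b n s - a' s"] by simp
    also have "\<dots> \<le> integral\<^sup>L M (\<lambda>s. e n)"
    proof (rule integral_mono)
      show "integrable M (\<lambda>s. norm (b n s - a' s))"
        using bint a'int by (intro integrable_norm Bochner_Integration.integrable_diff)
      show "integrable M (\<lambda>s. e n)" by (rule FM_integrable_const_bound[where B="\<bar>e n\<bar>"]) auto
      fix s
      show "norm (b n s - a' s) \<le> e n"
      proof (cases "s \<in> Q")
        case True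
        have "\<bar>a (p n s) - a s\<bar> \<le> \<omega> (dist (p n s) s)" unfolding a_def by (rule omega_dist[OF w])
        then show ?thesis using True pd[of s n] by (simp add: b_def a'_def dist_commute)
      qed (simp add: b_def a'_def e0)
    qed
    also have "\<dots> = measure M UNIV * e n" by (simp add: spaceM)
    finally show ?thesis .
  qed
  have lim0: "(\<lambda>n. h (SI (g n)) \<theta>) \<longlonglongrightarrow> 0"
  proof (rule Lim_null_comparison[OF always_eventually])
    show "\<forall>n. norm (h (SI (g n)) \<theta>) \<le> measure M UNIV * e n"
      unfolding SIg h_phi0 using bb by simp
    show "(\<lambda>n. measure M UNIV * e n) \<longlonglongrightarrow> 0" using tendsto_mult_right_zero[OF eL] by simp
  qed
  have "I = \<theta>" by (rule limit_unique[OF limI lim0])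
  then show ?thesis using fH val unfolding I_def c_def L_def by blast
qed

end

theorem corollary2:
  fixes add :: "'x \<Rightarrow> 'x \<Rightarrow> 'x" and smul :: "real \<Rightarrow> 'x \<Rightarrow> 'x" and \<theta> :: 'x
    and h :: "'x \<Rightarrow> 'x \<Rightarrow> real" and P :: "'x \<Rightarrow> 'x"
    and M :: "'t::metric_space measure" and \<omega> :: "real \<Rightarrow> real"
    and t :: 't and Q :: "'t set"
  assumes X: "L_space add smul \<theta> h"
    and P: "convexifying_operator add smul h P"
    and T: "compact (UNIV :: 't set)"
    and M_borel: "sets M = sets borel" and M_fin: "finite_measure M"
    and \<omega>: "modulus_of_continuity \<omega>"
    and Q: "compact Q" and Qpos: "measure M Q > 0"
  shows "((SUP f \<in> {f \<in> H_omega \<omega> h. set_integral_X add smul \<theta> h P M Q f = \<theta>}.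
            ereal (h (P (f t)) \<theta>))
         \<le> ereal ((LINT s:Q|M. \<omega> (dist t s)) / measure M Q))
    \<and> (isotropic add h \<and> invertible_elems add \<theta> \<inter> convex_elems add smul \<noteq> {\<theta>} \<longrightarrow>
         (SUP f \<in> {f \<in> H_omega \<omega> h. set_integral_X add smul \<theta> h P M Q f = \<theta>}.
            ereal (h (P (f t)) \<theta>))
         = ereal ((LINT s:Q|M. \<omega> (dist t s)) / measure M Q))"
proof -
  interpret L: LSM add smul \<theta> h P M
    unfolding LSM_def LS_def LSM_axioms_def using X P M_borel M_fin by auto
  have Qm: "Q \<in> sets M" using M_borel Q compact_imp_closed borel_closed by auto
  define S where "S = {f \<in> H_omega \<omega> h. set_integral_X add smul \<theta> h P M Q f = \<theta>}"
  define R where "R = (LINT s:Q|M. \<omega> (dist t s)) / measure M Q"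
  have up: "(SUP f \<in> S. ereal (h (P (f t)) \<theta>)) \<le> ereal R"
  proof (rule SUP_least)
    fix f assume "f \<in> S"
    then show "ereal (h (P (f t)) \<theta>) \<le> ereal R"
      unfolding S_def R_def using L.upper[OF T \<omega> Qm Qpos] by auto
  qed
  have eq: "(SUP f \<in> S. ereal (h (P (f t)) \<theta>)) = ereal R"
    if iso: "isotropic add h" and nt: "invertible_elems add \<theta> \<inter> convex_elems add smul \<noteq> {\<theta>}"
  proof -
    have "\<theta> \<in> invertible_elems add \<theta> \<inter> convex_elems add smul"
      unfolding invertible_elems_def using L.theta_convex L.neut by auto
    then obtain e0 where e0: "e0 \<in> invertible_elems add \<theta>" "e0 \<in> convex_elems add smul" "e0 \<noteq> \<theta>"
      using nt by blast
    obtain e0' where e0': "add e0 e0' = \<theta>" using e0(1) unfolding invertible_elems_def by blast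
    have hpos: "h e0 \<theta> > 0" using L.hpos[of e0 \<theta>] L.heq[of e0 \<theta>] e0(3) by linarith
    define k where "k = 1 / h e0 \<theta>"
    have k0: "k > 0" unfolding k_def using hpos by simp
    interpret I: LSMI add smul \<theta> h P M "smul k e0" "smul k e0'"
    proof (unfold_locales)
      show "isotropic add h" by (rule iso)
      show "smul k e0 \<in> convex_elems add smul" using L.convex_smul[OF e0(2)] k0 by simp
      show "add (smul k e0) (smul k e0') = \<theta>" by (simp add: L.distr[symmetric] e0' L.smul_theta)
      show "h (smul k e0) \<theta> = 1" using L.hscale_theta[of k e0] k0 hpos unfolding k_def by simp
    qed
    obtain f where f: "f \<in> H_omega \<omega> h" "set_integral_X add smul \<theta> h P M Q f = \<theta>"
      "h (P (f t)) \<theta> = R"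
      using I.lower[OF T \<omega> Qm Qpos] unfolding R_def by blast
    have "ereal R \<le> (SUP f \<in> S. ereal (h (P (f t)) \<theta>))"
      using f by (intro SUP_upper2[of f]) (auto simp: S_def)
    then show ?thesis using up by simp
  qed
  show ?thesis using up eq unfolding S_def R_def by blast
qed

end
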